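(* Let $Q_1,\ldots,Q_m\in\mathbb R^{n\times n}$ be symmetric positive semidefinite, $a_{ij}\in\{-1,0,1\}$, $b_i\in\mathbb R^n$, $c_i\in\mathbb R$ for $i=0,\ldots,p$, $j=1,\ldots,m$, and $-\infty\le l_i\le u_i\le+\infty$ for $i=1,\ldots,p$. Let $g_i(x)=\sum_{j=1}^m a_{ij}x^TQ_jx+2b_i^Tx+c_i$ and consider \[ ({\rm QCQP})\quad \min_{x\in\mathbb R^n}\ g_0(x)\quad\text{s.t.}\quad l_i\le g_i(x)\le u_i,\ i=1,\ldots,p. \] Let $K=\{j\in\{1,\ldots,m\}:\ a_{0j}=-1\text{ or } a_{ij}\ne0\text{ for some } i\in\{1,\ldots,p\}\}$ and consider \[ ({\rm CR'})\quad \min_{x,\,t_j(j\in K)}\ \sum_{j\notin K}a_{0j}x^TQ_jx+\sum_{j\in K}a_{0j}t_j+2b_0^Tx+c_0 \] \[ \text{s.t.}\quad l_i\le \sum_{j\in K}a_{ij}t_j+2b_i^Tx+c_i\le u_i,\ i=1,\ldots,p,\qquad \left\|\begin{pmatrix}Q_j^{1/2}x\\ \frac{t_j-1}{2}\end{pmatrix}\right\|\le\frac{t_j+1}{2},\ j\in K. \] Suppose \[ \max_{j\in K}\ \dim\Big({\rm span}\Big(\{b_1,\ldots,b_p\}\cup\mathcal N(Q_j)\cup\bigcup_{i\in\{1,\ldots,m\},\,i\ne j}\mathcal R(Q_i)\Big)\Big)\le n-1, \] and $v({\rm CR'})>-\infty$. Then (QCQP) is equivalent to (CR'), in the sense that $x^*$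 globally solves (QCQP) if and only if $(x^*,t_j^*(j\in K)):=(x^*,x^{*T}Q_jx^*(j\in K))$ globally solves (CR').
   Context: $\mathcal N(Q)$, $\mathcal R(Q)$ denote null space and range; $Q^{1/2}$ is the positive semidefinite square root; $v(\cdot)$ denotes optimal value; $\|\cdot\|$ is the Euclidean norm. *)

theory Defs
  imports "HOL-Analysis.Analysis" "HOL-Library.Extended_Real"
begin

definition psd_sym :: "real^'n^'n \<Rightarrow> bool" where
  "psd_sym Q \<longleftrightarrow> transpose Q = Q \<and> (\<forall>x. 0 \<le> x \<bullet> (Q *v x))"

definition psd_sqrt :: "real^'n^'n \<Rightarrow> real^'n^'n" where
  "psd_sqrt Q = (THE S. psd_sym S \<and> S ** S = Q)"

definition null_space :: "real^'n^'n \<Rightarrow> (real^'n) set" where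
  "null_space Q = {x. Q *v x = 0}"

definition range_space :: "real^'n^'n \<Rightarrow> (real^'n) set" where
  "range_space Q = range (\<lambda>x. Q *v x)"

definition gfun :: "nat \<Rightarrow> (nat \<Rightarrow> real^'n^'n) \<Rightarrow> (nat \<Rightarrow> nat \<Rightarrow> real)
    \<Rightarrow> (nat \<Rightarrow> real^'n) \<Rightarrow> (nat \<Rightarrow> real) \<Rightarrow> nat \<Rightarrow> real^'n \<Rightarrow> real" where
  "gfun m Q a b c i x = (\<Sum>j=1..m. a i j * (x \<bullet> (Q j *v x))) + 2 * (b i \<bullet> x) + c i"

definition qcqp_feasible :: "nat \<Rightarrow> nat \<Rightarrow> (nat \<Rightarrow> real^'n^'n) \<Rightarrow> (nat \<Rightarrow> nat \<Rightarrow> real)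
    \<Rightarrow> (nat \<Rightarrow> real^'n) \<Rightarrow> (nat \<Rightarrow> real) \<Rightarrow> (nat \<Rightarrow> ereal) \<Rightarrow> (nat \<Rightarrow> ereal) \<Rightarrow> real^'n \<Rightarrow> bool" where
  "qcqp_feasible m p Q a b c l u x \<longleftrightarrow>
     (\<forall>i\<in>{1..p}. l i \<le> ereal (gfun m Q a b c i x) \<and> ereal (gfun m Q a b c i x) \<le> u i)"

definition qcqp_solves where
  "qcqp_solves m p Q a b c l u x \<longleftrightarrow> qcqp_feasible m p Q a b c l u x \<and>
     (\<forall>y. qcqp_feasible m p Q a b c l u y \<longrightarrow> gfun m Q a b c 0 x \<le> gfun m Q a b c 0 y)"

definition Kset :: "nat \<Rightarrow> nat \<Rightarrow> (nat \<Rightarrow> nat \<Rightarrow> real) \<Rightarrow> nat set" where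
  "Kset m p a = {j\<in>{1..m}. a 0 j = -1 \<or> (\<exists>i\<in>{1..p}. a i j \<noteq> 0)}"

text \<open>Objective of (CR'); the variables t_j are only used for j in K.\<close>
definition cr_obj :: "nat \<Rightarrow> nat \<Rightarrow> (nat \<Rightarrow> real^'n^'n) \<Rightarrow> (nat \<Rightarrow> nat \<Rightarrow> real)
    \<Rightarrow> (nat \<Rightarrow> real^'n) \<Rightarrow> (nat \<Rightarrow> real) \<Rightarrow> real^'n \<Rightarrow> (nat \<Rightarrow> real) \<Rightarrow> real" where
  "cr_obj m p Q a b c x t =
     (\<Sum>j\<in>{1..m} - Kset m p a. a 0 j * (x \<bullet> (Q j *v x)))
     + (\<Sum>j\<in>Kset m p a. a 0 j * t j) + 2 * (b 0 \<bullet> x) + c 0"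

definition cr_con :: "nat \<Rightarrow> nat \<Rightarrow> (nat \<Rightarrow> nat \<Rightarrow> real)
    \<Rightarrow> (nat \<Rightarrow> real^'n) \<Rightarrow> (nat \<Rightarrow> real) \<Rightarrow> nat \<Rightarrow> real^'n \<Rightarrow> (nat \<Rightarrow> real) \<Rightarrow> real" where
  "cr_con m p a b c i x t = (\<Sum>j\<in>Kset m p a. a i j * t j) + 2 * (b i \<bullet> x) + c i"

text \<open>Feasible set of (CR'); the stacked vector (Q_j^(1/2) x, (t_j-1)/2) is an element
  of the product space real^'n \<times> real, whose norm is the Euclidean norm.\<close>
definition cr_feasible :: "nat \<Rightarrow> nat \<Rightarrow> (nat \<Rightarrow> real^'n^'n) \<Rightarrow> (nat \<Rightarrow> nat \<Rightarrow> real)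
    \<Rightarrow> (nat \<Rightarrow> real^'n) \<Rightarrow> (nat \<Rightarrow> real) \<Rightarrow> (nat \<Rightarrow> ereal) \<Rightarrow> (nat \<Rightarrow> ereal)
    \<Rightarrow> real^'n \<Rightarrow> (nat \<Rightarrow> real) \<Rightarrow> bool" where
  "cr_feasible m p Q a b c l u x t \<longleftrightarrow>
     (\<forall>i\<in>{1..p}. l i \<le> ereal (cr_con m p a b c i x t) \<and> ereal (cr_con m p a b c i x t) \<le> u i) \<and>
     (\<forall>j\<in>Kset m p a. norm (psd_sqrt (Q j) *v x, (t j - 1) / 2) \<le> (t j + 1) / 2)"

definition cr_solves where
  "cr_solves m p Q a b c l u x t \<longleftrightarrow> cr_feasible m p Q a b c l u x t \<and>
     (\<forall>y s. cr_feasible m p Q a b c l u y s \<longrightarrow> cr_obj m p Q a b c x t \<le> cr_obj m p Q a b c y s)"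

text \<open>Optimal value v(CR') as an extended real (+\<infinity> if infeasible).\<close>
definition cr_value where
  "cr_value m p Q a b c l u =
     (INF z\<in>{(x,t). cr_feasible m p Q a b c l u x t}. ereal (cr_obj m p Q a b c (fst z) (snd z)))"

end

theory Submission
  imports Defs
begin


lemma sym_inner:
  fixes A :: "real^'n^'n"
  assumes "transpose A = A"
  shows "(A *v x) \<bullet> y = x \<bullet> (A *v y)"
proof -
  have "x \<bullet> (A *v y) = (x v* A) \<bullet> y" by (simp add: dot_lmul_matrix)
  also have "x v* A = transpose A *v x" by (simp add: transpose_matrix_vector)
  finally show ?thesis using assms by simp
qed

lemma max_eigen:
  fixes A :: "real^'n^'n"
  assumes sym: "transpose A = A" and V: "subspace V" and inv: "\<forall>v\<in>V. A *v v \<in> V"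
    and ne: "V \<noteq> {0}"
  obtains x lam where "x \<in> V" "norm x = 1" "A *v x = lam *\<^sub>R x"
proof -
  let ?S = "V \<inter> sphere 0 1"
  have cS: "compact ?S"
    by (intro closed_Int_compact closed_subspace V compact_sphere)
  obtain v where v: "v \<in> V" "v \<noteq> 0" using ne V subspace_0 by blast
  have "v /\<^sub>R norm v \<in> ?S" using v V by (auto simp: subspace_scale)
  then have neS: "?S \<noteq> {}" by blast
  have cont: "continuous_on ?S (\<lambda>x. x \<bullet> (A *v x))"
  proof -
    have "bounded_linear (\<lambda>x. A *v x)" by (simp add: linear_conv_bounded_linear)
    then have "continuous_on ?S (\<lambda>x. A *v x)" by (rule linear_continuous_on)
    then show ?thesis by (intro continuous_on_inner continuous_on_id)
  qed
  obtain x where x: "x \<in> ?S" and xmax: "\<forall>y\<in>?S. y \<bullet> (A *v y) \<le> x \<bullet> (A *v x)"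
    using continuous_attains_sup[OF cS neS cont] by blast
  define lam where "lam = x \<bullet> (A *v x)"
  have nx: "norm x = 1" "x \<bullet> x = 1" using x by (auto simp: norm_eq_sqrt_inner)
  have hom: "y \<bullet> (A *v y) \<le> lam * (y \<bullet> y)" if "y \<in> V" for y
  proof (cases "y = 0")
    case True then show ?thesis by simp
  next
    case False
    have "y /\<^sub>R norm y \<in> ?S" using that V False by (auto simp: subspace_scale)
    then have "(y /\<^sub>R norm y) \<bullet> (A *v (y /\<^sub>R norm y)) \<le> lam" using xmax lam_def by blast
    then have "(y \<bullet> (A *v y)) / (norm y)^2 \<le> lam"
      by (simp add: matrix_vector_mult_scaleR power2_eq_square divide_simps)
    then show ?thesis using False by (simp add: divide_simps power2_norm_eq_inner)
  qed
  define w where "w = A *v x - lam *\<^sub>R x"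
  have wV: "w \<in> V" unfolding w_def using x inv V by (auto intro: subspace_diff subspace_scale)
  have wx: "w \<bullet> x = 0" unfolding w_def using nx
    by (simp add: inner_diff_left inner_diff_right lam_def inner_commute)
  have wAx: "w \<bullet> (A *v x) = w \<bullet> w"
  proof -
    have "w \<bullet> w = w \<bullet> (A *v x) - lam * (w \<bullet> x)"
      by (subst (2) w_def) (simp only: inner_diff_right inner_scaleR_right)
    then show ?thesis using wx by simp
  qed
  have key: "2 * t * (w \<bullet> w) \<le> t^2 * (lam * (w \<bullet> w) - w \<bullet> (A *v w))" for t
  proof -
    have "x + t *\<^sub>R w \<in> V" using x wV V by (auto intro: subspace_add subspace_scale)
    from hom[OF this] have h1:
      "(x + t *\<^sub>R w) \<bullet> (A *v (x + t *\<^sub>R w)) \<le> lam * ((x + t *\<^sub>R w) \<bullet> (x + t *\<^sub>R w))" .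
    have h2: "(x + t *\<^sub>R w) \<bullet> (A *v (x + t *\<^sub>R w)) =
        lam + 2 * t * (w \<bullet> w) + t^2 * (w \<bullet> (A *v w))"
      using wAx sym_inner[OF sym, of x w] inner_commute[of "A *v x" w]
      by (simp add: matrix_vector_right_distrib matrix_vector_mult_scaleR inner_add_left inner_add_right
          lam_def power2_eq_square algebra_simps)
    have h3: "(x + t *\<^sub>R w) \<bullet> (x + t *\<^sub>R w) = 1 + t^2 * (w \<bullet> w)"
      using nx wx by (simp add: inner_add_left inner_add_right inner_commute power2_eq_square algebra_simps)
    have "lam + 2 * t * (w \<bullet> w) + t^2 * (w \<bullet> (A *v w)) \<le> lam * (1 + t^2 * (w \<bullet> w))"
      using h1 unfolding h2 h3 .
    then show ?thesis by (simp add: algebra_simps)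
  qed
  define C where "C = lam * (w \<bullet> w) - w \<bullet> (A *v w)"
  have "w \<bullet> w \<le> 0"
  proof (cases "C \<le> 0")
    case True then show ?thesis using key[of 1] C_def by simp
  next
    case False
    have "2 * ((w \<bullet> w) / C) * (w \<bullet> w) \<le> ((w \<bullet> w) / C)^2 * C"
      using key[of "(w \<bullet> w) / C"] C_def by simp
    then have "2 * (w \<bullet> w)^2 / C \<le> (w \<bullet> w)^2 / C" using False
      by (simp add: power2_eq_square field_simps)
    then have "(w \<bullet> w)^2 \<le> 0" using False by (simp add: divide_simps)
    then show ?thesis by simp
  qed
  then have "w = 0" by (metis inner_gt_zero_iff not_le)
  then have "A *v x = lam *\<^sub>R x" unfolding w_def by simp
  then show ?thesis using that x nx by blast
qed

lemma eigenbasis_sub: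
  fixes A :: "real^'n^'n"
  assumes sym: "transpose A = A"
  shows "subspace V \<Longrightarrow> (\<forall>v\<in>V. A *v v \<in> V) \<Longrightarrow>
    \<exists>B. B \<subseteq> V \<and> pairwise orthogonal B \<and> (\<forall>b\<in>B. norm b = 1 \<and> (\<exists>l. A *v b = l *\<^sub>R b)) \<and> span B = V"
proof (induction "dim V" arbitrary: V rule: less_induct)
  case less
  show ?case
  proof (cases "V = {0}")
    case True
    then show ?thesis by (intro exI[of _ "{}"]) auto
  next
    case False
    obtain x lam where x: "x \<in> V" "norm x = 1" "A *v x = lam *\<^sub>R x"
      using max_eigen[OF sym less.prems False] by blast
    have xx: "x \<bullet> x = 1" using x by (simp add: norm_eq_sqrt_inner)
    define V' where "V' = V \<inter> {v. x \<bullet> v = 0}"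
    have sV': "subspace V'" unfolding V'_def
      by (intro subspace_inter less.prems(1)) (auto simp: subspace_def inner_add_right)
    have iV': "\<forall>v\<in>V'. A *v v \<in> V'"
    proof
      fix v assume "v \<in> V'"
      then have "v \<in> V" "x \<bullet> v = 0" by (auto simp: V'_def)
      moreover have "x \<bullet> (A *v v) = (A *v x) \<bullet> v" using sym_inner[OF sym] by simp
      ultimately show "A *v v \<in> V'" using less.prems(2) x by (auto simp: V'_def)
    qed
    have "span V' \<subset> span V"
    proof -
      have "x \<notin> V'" using xx by (simp add: V'_def)
      then have "V' \<subset> V" using x unfolding V'_def by blast
      moreover have "span V' = V'" "span V = V" using sV' less.prems(1) by (simp_all add: span_eq_iff)
      ultimately show ?thesis by (simp only:)
    qed
    then have "dim V' < dim V" by (rule dim_psubset)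
    from less.hyps[OF this sV' iV'] obtain B' where B':
      "B' \<subseteq> V'" "pairwise orthogonal B'" "\<forall>b\<in>B'. norm b = 1 \<and> (\<exists>l. A *v b = l *\<^sub>R b)" "span B' = V'"
      by blast
    have xB': "x \<notin> B'" using B'(1) xx by (auto simp: V'_def)
    show ?thesis
    proof (intro exI[of _ "insert x B'"] conjI)
      show "insert x B' \<subseteq> V" using B'(1) x by (auto simp: V'_def)
      show "pairwise orthogonal (insert x B')"
        using B'(1,2) xB' by (auto simp: pairwise_insert V'_def orthogonal_def inner_commute)
      show "\<forall>b\<in>insert x B'. norm b = 1 \<and> (\<exists>l. A *v b = l *\<^sub>R b)" using B'(3) x by auto
      show "span (insert x B') = V"
      proof
        show "span (insert x B') \<subseteq> V"
          using B'(1) x less.prems(1) by (intro span_minimal) (auto simp: V'_def)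
        show "V \<subseteq> span (insert x B')"
        proof
          fix v assume v: "v \<in> V"
          have "v - (x \<bullet> v) *\<^sub>R x \<in> V'"
            using v x xx less.prems(1) by (auto simp: V'_def inner_diff_right intro: subspace_diff subspace_scale)
          then show "v \<in> span (insert x B')" using B'(4) by (auto simp: span_breakdown_eq)
        qed
      qed
    qed
  qed
qed

lemma eigenbasis:
  fixes A :: "real^'n^'n"
  assumes sym: "transpose A = A"
  obtains B where "finite B" "pairwise orthogonal B" "\<forall>b\<in>B. norm b = 1"
    "\<forall>b\<in>B. A *v b = (b \<bullet> (A *v b)) *\<^sub>R b" "span B = UNIV"
proof -
  obtain B where B: "pairwise orthogonal B" "\<forall>b\<in>B. norm b = 1 \<and> (\<exists>l. A *v b = l *\<^sub>R b)"
    "span B = UNIV"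
    using eigenbasis_sub[OF sym, of UNIV] by auto
  have "\<forall>b\<in>B. A *v b = (b \<bullet> (A *v b)) *\<^sub>R b"
  proof
    fix b assume "b \<in> B"
    then obtain l where "norm b = 1" "A *v b = l *\<^sub>R b" using B by blast
    moreover then have "b \<bullet> b = 1" by (simp add: norm_eq_sqrt_inner)
    ultimately show "A *v b = (b \<bullet> (A *v b)) *\<^sub>R b" by simp
  qed
  then show ?thesis using that B pairwise_orthogonal_imp_finite[OF B(1)] by blast
qed

lemma vec_eq_inner: "(\<forall>y. (u::real^'n) \<bullet> y = v \<bullet> y) \<Longrightarrow> u = v"
  by (metis inner_diff_left inner_eq_zero_iff right_minus_eq)

lemma psd_sqrt_ex1:
  fixes A :: "real^'n^'n"
  assumes psd: "psd_sym A"
  shows "\<exists>!S. psd_sym S \<and> S ** S = A"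
proof -
  have sym: "transpose A = A" using psd by (simp add: psd_sym_def)
  obtain B where B: "finite B" "pairwise orthogonal B" "\<forall>b\<in>B. norm b = 1"
    "\<forall>b\<in>B. A *v b = (b \<bullet> (A *v b)) *\<^sub>R b" "span B = UNIV"
    using eigenbasis[OF sym] by blast
  define lam where "lam b = b \<bullet> (A *v b)" for b
  have lam0: "lam b \<ge> 0" for b using psd by (simp add: psd_sym_def lam_def)
  have Ab: "A *v b = lam b *\<^sub>R b" if "b \<in> B" for b using B(4) that by (simp add: lam_def)
  have bb: "b \<bullet> b = 1" if "b \<in> B" for b using B(3) that by (simp add: norm_eq_sqrt_inner)
  have bb': "b \<bullet> b' = 0" if "b \<in> B" "b' \<in> B" "b \<noteq> b'" for b b'
    using B(2) that by (auto simp: pairwise_def orthogonal_def)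
  define f where "f x = (\<Sum>b\<in>B. (sqrt (lam b) * (b \<bullet> x)) *\<^sub>R b)" for x
  have linf: "linear f"
    unfolding linear_iff f_def
    by (simp add: inner_add_right sum.distrib algebra_simps scaleR_add_left scaleR_sum_right)
  have fb: "f b = sqrt (lam b) *\<^sub>R b" if "b \<in> B" for b
  proof -
    have "f b = (sqrt (lam b) * (b \<bullet> b)) *\<^sub>R b + (\<Sum>b'\<in>B - {b}. (sqrt (lam b') * (b' \<bullet> b)) *\<^sub>R b')"
      unfolding f_def using B(1) that by (simp add: sum.remove)
    also have "(\<Sum>b'\<in>B - {b}. (sqrt (lam b') * (b' \<bullet> b)) *\<^sub>R b') = 0"
      using bb' that by (intro sum.neutral) auto
    finally show ?thesis using bb[OF that] by simp
  qed
  define S where "S = matrix f"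
  have linf': "Vector_Spaces.linear (*s) (*s) f" using linf by (simp add: linear_def scalar_mult_eq_scaleR)
  have Sx: "S *v x = f x" for x unfolding S_def using matrix_works[OF linf'] by simp
  have fsym: "x \<bullet> f y = f x \<bullet> y" for x y
    unfolding f_def by (simp add: inner_sum_right inner_sum_left algebra_simps inner_commute)
  have symS: "transpose S = S"
  proof (subst matrix_eq, intro allI vec_eq_inner)
    fix x y
    have "(transpose S *v x) \<bullet> y = x \<bullet> (S *v y)"
      by (simp add: transpose_matrix_vector dot_lmul_matrix)
    then show "(transpose S *v x) \<bullet> y = (S *v x) \<bullet> y" using fsym Sx by simp
  qed
  have psdS: "psd_sym S"
    unfolding psd_sym_def
  proof (intro conjI symS allI)
    fix x
    have "x \<bullet> (S *v x) = (\<Sum>b\<in>B. sqrt (lam b) * ((b \<bullet> x) * (b \<bullet> x)))"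
      unfolding Sx f_def by (simp add: inner_sum_right algebra_simps inner_commute)
    also have "\<dots> \<ge> 0" using lam0 by (intro sum_nonneg) simp
    finally show "0 \<le> x \<bullet> (S *v x)" .
  qed
  have SS: "S ** S = A"
  proof (subst matrix_eq, intro allI)
    fix x
    have "f (f x) = A *v x"
    proof (rule linear_eq_on_span[where f="\<lambda>x. f (f x)" and g="\<lambda>x. A *v x" and B=B])
      show "linear (\<lambda>x. f (f x))" using linf linear_compose[of f f] by (simp add: o_def)
      show "linear (\<lambda>x. A *v x)" by simp
      show "x \<in> span B" using B(5) by simp
      fix b assume b: "b \<in> B"
      have "f (f b) = sqrt (lam b) *\<^sub>R f b" using fb[OF b] linear_scale[OF linf] by simp
      also have "\<dots> = lam b *\<^sub>R b" using fb[OF b] lam0[of b] by simp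
      finally show "f (f b) = A *v b" using Ab[OF b] by simp
    qed
    then show "(S ** S) *v x = A *v x" by (simp add: Sx matrix_vector_mul_assoc[symmetric])
  qed
  have uniq: "T *v b = sqrt (lam b) *\<^sub>R b" if T: "psd_sym T" "T ** T = A" and b: "b \<in> B" for T b
  proof -
    have symT: "transpose T = T" using T by (simp add: psd_sym_def)
    have TT: "T *v (T *v b) = lam b *\<^sub>R b" using T Ab[OF b] by (simp add: matrix_vector_mul_assoc)
    show ?thesis
    proof (cases "lam b = 0")
      case True
      have "(T *v b) \<bullet> (T *v b) = b \<bullet> (T *v (T *v b))" using sym_inner[OF symT] by simp
      also have "\<dots> = 0" using TT True by simp
      finally show ?thesis using True by simp
    next
      case False
      define mu where "mu = sqrt (lam b)"
      have mu: "mu > 0" "mu * mu = lam b" using False lam0[of b] by (auto simp: mu_def)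
      define w where "w = T *v b - mu *\<^sub>R b"
      have Tw: "T *v w = - mu *\<^sub>R w"
        unfolding w_def using TT mu by (simp add: matrix_vector_mult_diff_distrib matrix_vector_mult_scaleR algebra_simps)
      have "0 \<le> w \<bullet> (T *v w)" using T by (simp add: psd_sym_def)
      also have "\<dots> = - mu * (w \<bullet> w)" using Tw by simp
      finally have "w \<bullet> w \<le> 0" using mu by (simp add: mult_le_0_iff)
      then have "w = 0" by (metis inner_gt_zero_iff not_le)
      then show ?thesis by (simp add: w_def mu_def)
    qed
  qed
  show ?thesis
  proof (rule ex1I[of _ S])
    show "psd_sym S \<and> S ** S = A" using psdS SS by simp
    fix T assume T: "psd_sym T \<and> T ** T = A"
    show "T = S"
    proof (subst matrix_eq, intro allI)
      fix x
      show "T *v x = S *v x"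
      proof (rule linear_eq_on_span[where f="\<lambda>x. T *v x" and g="\<lambda>x. S *v x" and B=B])
        fix b assume "b \<in> B"
        then show "T *v b = S *v b" using uniq[of T b] uniq[OF psdS SS, of b] T by simp
      qed (use B(5) in auto)
    qed
  qed
qed

lemma psd_sqrt_prop:
  assumes "psd_sym A"
  shows "psd_sym (psd_sqrt A) \<and> psd_sqrt A ** psd_sqrt A = A"
  unfolding psd_sqrt_def using theI'[OF psd_sqrt_ex1[OF assms]] .

lemma psd_sqrt_norm:
  assumes "psd_sym A"
  shows "norm (psd_sqrt A *v x)^2 = x \<bullet> (A *v x)"
proof -
  let ?S = "psd_sqrt A"
  have "transpose ?S = ?S" "?S ** ?S = A" using psd_sqrt_prop[OF assms] by (auto simp: psd_sym_def)
  then show ?thesis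
    using sym_inner[of ?S x "?S *v x"] by (simp add: power2_norm_eq_inner matrix_vector_mul_assoc)
qed



lemma psd_zero:
  assumes "psd_sym A" "x \<bullet> (A *v x) = 0"
  shows "A *v x = 0"
proof -
  have "norm (psd_sqrt A *v x) = 0" using psd_sqrt_norm[OF assms(1), of x] assms(2) by simp
  then have "psd_sqrt A *v x = 0" by simp
  then have "psd_sqrt A *v (psd_sqrt A *v x) = 0" by simp
  then show ?thesis using psd_sqrt_prop[OF assms(1)] by (simp add: matrix_vector_mul_assoc)
qed

lemma soc_iff:
  assumes "psd_sym A"
  shows "norm (psd_sqrt A *v x, (t - 1) / 2) \<le> (t + 1) / 2 \<longleftrightarrow> x \<bullet> (A *v x) \<le> (t::real)"
proof -
  define q where "q = x \<bullet> (A *v x)"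
  have q0: "q \<ge> 0" using assms by (simp add: psd_sym_def q_def)
  have n: "norm (psd_sqrt A *v x, (t - 1) / 2) = sqrt (q + ((t - 1) / 2)^2)"
    using psd_sqrt_norm[OF assms] by (simp add: norm_Pair q_def power_divide)
  show ?thesis
  proof (cases "t + 1 \<ge> 0")
    case True
    have "sqrt (q + ((t - 1) / 2)^2) \<le> (t + 1) / 2 \<longleftrightarrow> q + ((t - 1) / 2)^2 \<le> ((t + 1) / 2)^2"
      using True q0 by (intro real_sqrt_le_iff') (auto intro: add_nonneg_nonneg)
    also have "\<dots> \<longleftrightarrow> q \<le> t" by (simp add: power2_eq_square field_simps)
    finally show ?thesis using n q_def by simp
  next
    case False
    have "sqrt (q + ((t - 1) / 2)^2) \<ge> 0" using q0 by simp
    moreover have "(t + 1) / 2 < 0" using False by simp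
    ultimately have "\<not> norm (psd_sqrt A *v x, (t - 1) / 2) \<le> (t + 1) / 2" unfolding n by (meson le_less_trans not_le)
    moreover have "\<not> q \<le> t" using False q0 by linarith
    ultimately show ?thesis using q_def by simp
  qed
qed

lemma quad_expand:
  fixes M :: "real^'n^'n"
  assumes "transpose M = M"
  shows "(z + \<alpha> *\<^sub>R d) \<bullet> (M *v (z + \<alpha> *\<^sub>R d)) = z \<bullet> (M *v z) + 2 * \<alpha> * (d \<bullet> (M *v z)) + \<alpha>^2 * (d \<bullet> (M *v d))"
proof -
  have "z \<bullet> (M *v d) = d \<bullet> (M *v z)" using sym_inner[OF assms, of d z] by (simp add: inner_commute)
  then show ?thesis
    by (simp add: matrix_vector_right_distrib matrix_vector_mult_scaleR inner_add_left inner_add_right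
        power2_eq_square algebra_simps)
qed

lemma K_sub: "Kset m p a \<subseteq> {1..m}" by (auto simp: Kset_def)

lemma notK: "j \<in> {1..m} \<Longrightarrow> j \<notin> Kset m p a \<Longrightarrow> i \<in> {1..p} \<Longrightarrow> a i j = 0"
  by (auto simp: Kset_def)

lemma obj_eq:
  assumes "\<forall>j\<in>Kset m p a. z \<bullet> (Q j *v z) = s j"
  shows "cr_obj m p Q a b c z s = gfun m Q a b c 0 z"
proof -
  have "(\<Sum>j=1..m. a 0 j * (z \<bullet> (Q j *v z))) =
     (\<Sum>j\<in>{1..m} - Kset m p a. a 0 j * (z \<bullet> (Q j *v z))) + (\<Sum>j\<in>Kset m p a. a 0 j * (z \<bullet> (Q j *v z)))"
    using K_sub by (intro sum.subset_diff) auto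
  also have "(\<Sum>j\<in>Kset m p a. a 0 j * (z \<bullet> (Q j *v z))) = (\<Sum>j\<in>Kset m p a. a 0 j * s j)"
    using assms by (intro sum.cong) auto
  finally show ?thesis by (simp add: cr_obj_def gfun_def)
qed

lemma con_eq:
  assumes "\<forall>j\<in>Kset m p a. z \<bullet> (Q j *v z) = s j" "i \<in> {1..p}"
  shows "cr_con m p a b c i z s = gfun m Q a b c i z"
proof -
  have "(\<Sum>j=1..m. a i j * (z \<bullet> (Q j *v z))) =
     (\<Sum>j\<in>{1..m} - Kset m p a. a i j * (z \<bullet> (Q j *v z))) + (\<Sum>j\<in>Kset m p a. a i j * (z \<bullet> (Q j *v z)))"
    using K_sub by (intro sum.subset_diff) auto
  also have "(\<Sum>j\<in>{1..m} - Kset m p a. a i j * (z \<bullet> (Q j *v z))) = 0"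
    using notK[OF _ _ assms(2)] by (intro sum.neutral) auto
  also have "(\<Sum>j\<in>Kset m p a. a i j * (z \<bullet> (Q j *v z))) = (\<Sum>j\<in>Kset m p a. a i j * s j)"
    using assms by (intro sum.cong) auto
  finally show ?thesis by (simp add: cr_con_def gfun_def)
qed

lemma direction:
  fixes Q :: "nat \<Rightarrow> real^'n^'n"
  assumes psd: "\<forall>j\<in>{1..m}. psd_sym (Q j)"
    and dimcond: "\<forall>j\<in>Kset m p a.
        dim (span (b ` {1..p} \<union> null_space (Q j) \<union> (\<Union>i\<in>{1..m} - {j}. range_space (Q i))))
          \<le> CARD('n) - 1"
    and j: "j \<in> Kset m p a"
  obtains d where "\<forall>i\<in>{1..p}. b i \<bullet> d = 0" "\<forall>i\<in>{1..m}-{j}. Q i *v d = 0" "d \<bullet> (Q j *v d) > 0"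
proof -
  let ?S = "b ` {1..p} \<union> null_space (Q j) \<union> (\<Union>i\<in>{1..m} - {j}. range_space (Q i))"
  have "dim ?S \<le> CARD('n) - 1" using dimcond j by simp
  moreover have "CARD('n) > 0" by simp
  ultimately have "dim ?S < CARD('n)" by linarith
  then have "dim ?S < DIM(real^'n)" by (simp add: DIM_cart)
  then obtain d where d: "d \<noteq> 0" "\<And>y. y \<in> span ?S \<Longrightarrow> orthogonal d y"
    using orthogonal_to_subspace_exists by blast
  have dS: "d \<bullet> y = 0" if "y \<in> ?S" for y using d(2)[OF span_base[OF that]] by (simp add: orthogonal_def)
  have jm: "j \<in> {1..m}" using j K_sub by blast
  show ?thesis
  proof
    show "\<forall>i\<in>{1..p}. b i \<bullet> d = 0"
    proof
      fix i assume "i \<in> {1..p}"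
      then have "d \<bullet> b i = 0" by (intro dS) auto
      then show "b i \<bullet> d = 0" by (simp add: inner_commute)
    qed
    show "\<forall>i\<in>{1..m}-{j}. Q i *v d = 0"
    proof
      fix i assume i: "i \<in> {1..m} - {j}"
      have "Q i *v d \<in> range_space (Q i)" by (simp add: range_space_def)
      then have "Q i *v d \<in> ?S" using i by blast
      then have "d \<bullet> (Q i *v d) = 0" by (rule dS)
      then show "Q i *v d = 0" using psd_zero psd i by blast
    qed
    have "d \<bullet> (Q j *v d) \<ge> 0" using psd jm by (simp add: psd_sym_def)
    moreover have "d \<bullet> (Q j *v d) \<noteq> 0"
    proof
      assume "d \<bullet> (Q j *v d) = 0"
      then have "Q j *v d = 0" using psd_zero psd jm by blast
      then have "d \<in> ?S" by (simp add: null_space_def)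
      then have "d \<bullet> d = 0" by (rule dS)
      then show False using d(1) by simp
    qed
    ultimately show "d \<bullet> (Q j *v d) > 0" by simp
  qed
qed

lemma move:
  fixes Q :: "nat \<Rightarrow> real^'n^'n"
  assumes psd: "\<forall>j\<in>{1..m}. psd_sym (Q j)"
    and dimcond: "\<forall>j\<in>Kset m p a.
        dim (span (b ` {1..p} \<union> null_space (Q j) \<union> (\<Union>i\<in>{1..m} - {j}. range_space (Q i))))
          \<le> CARD('n) - 1"
    and j: "j \<in> Kset m p a" and le: "z' \<bullet> (Q j *v z') \<le> sj"
  obtains z where "\<forall>i\<in>{1..p}. b i \<bullet> z = b i \<bullet> z'"
    "\<forall>i\<in>{1..m}-{j}. z \<bullet> (Q i *v z) = z' \<bullet> (Q i *v z')"
    "z \<bullet> (Q j *v z) = sj" "b 0 \<bullet> z \<le> b 0 \<bullet> z'"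
proof -
  obtain d where d: "\<forall>i\<in>{1..p}. b i \<bullet> d = 0" "\<forall>i\<in>{1..m}-{j}. Q i *v d = 0" "d \<bullet> (Q j *v d) > 0"
    using direction[OF psd dimcond j] by blast
  have jm: "j \<in> {1..m}" using j K_sub by blast
  define g where "g = d \<bullet> (Q j *v d)"
  define be where "be = d \<bullet> (Q j *v z')"
  define q where "q = z' \<bullet> (Q j *v z')"
  define D where "D = be^2 + g * (sj - q)"
  define r where "r = sqrt D"
  have g: "g > 0" using d(3) g_def by simp
  have D0: "D \<ge> be^2" using g le by (simp add: D_def q_def)
  then have rD: "r^2 = D" using r_def by (simp add: order_trans[OF zero_le_power2 D0])
  have rb: "r \<ge> \<bar>be\<bar>" unfolding r_def using real_sqrt_le_mono[OF D0] by simp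
  define u where "u = (if b 0 \<bullet> d \<le> 0 then - be + r else - be - r)"
  define al where "al = u / g"
  define z where "z = z' + al *\<^sub>R d"
  have uu: "(u + be)^2 = D" using rD by (simp add: u_def power2_eq_square algebra_simps)
  show ?thesis
  proof
    show "\<forall>i\<in>{1..p}. b i \<bullet> z = b i \<bullet> z'" using d(1) by (simp add: z_def inner_add_right)
    show "\<forall>i\<in>{1..m}-{j}. z \<bullet> (Q i *v z) = z' \<bullet> (Q i *v z')"
    proof
      fix i assume i: "i \<in> {1..m}-{j}"
      have si: "transpose (Q i) = Q i" using psd i by (simp add: psd_sym_def)
      have "d \<bullet> (Q i *v z') = (Q i *v d) \<bullet> z'" using sym_inner[OF si, of d z'] by simp
      then have "d \<bullet> (Q i *v z') = 0" using d(2) i by simp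
      then show "z \<bullet> (Q i *v z) = z' \<bullet> (Q i *v z')"
        unfolding z_def quad_expand[OF si] using d(2) i by simp
    qed
    have sj: "transpose (Q j) = Q j" using psd jm by (simp add: psd_sym_def)
    have e1: "z \<bullet> (Q j *v z) = q + (2 * al * be + al^2 * g)"
      unfolding z_def quad_expand[OF sj] by (simp add: q_def be_def g_def)
    have e2: "2 * al * be + al^2 * g = ((u + be)^2 - be^2) / g"
      using g by (simp add: al_def power2_eq_square field_simps)
    have e3: "((u + be)^2 - be^2) / g = sj - q" using g uu by (simp add: D_def field_simps)
    show "z \<bullet> (Q j *v z) = sj" using e1 e2 e3 by simp
    have "al * (b 0 \<bullet> d) \<le> 0"
    proof (cases "b 0 \<bullet> d \<le> 0")
      case True
      then have "u \<ge> 0" using rb by (simp add: u_def)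
      then have "al \<ge> 0" using g by (simp add: al_def)
      then show ?thesis using True by (simp add: mult_nonneg_nonpos)
    next
      case False
      then have "u \<le> 0" using rb by (simp add: u_def)
      then have "al \<le> 0" using g by (simp add: al_def divide_nonpos_pos)
      then show ?thesis using False by (simp add: mult_nonpos_nonneg)
    qed
    then show "b 0 \<bullet> z \<le> b 0 \<bullet> z'" by (simp add: z_def inner_add_right)
  qed
qed

lemma reduce_ind:
  fixes Q :: "nat \<Rightarrow> real^'n^'n"
  assumes psd: "\<forall>j\<in>{1..m}. psd_sym (Q j)"
    and dimcond: "\<forall>j\<in>Kset m p a.
        dim (span (b ` {1..p} \<union> null_space (Q j) \<union> (\<Union>i\<in>{1..m} - {j}. range_space (Q i))))
          \<le> CARD('n) - 1"
    and ys: "\<forall>j\<in>Kset m p a. y \<bullet> (Q j *v y) \<le> s j"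
  shows "finite F \<Longrightarrow> F \<subseteq> Kset m p a \<Longrightarrow> \<exists>z. (\<forall>i\<in>{1..p}. b i \<bullet> z = b i \<bullet> y) \<and>
     (\<forall>j\<in>{1..m}-F. z \<bullet> (Q j *v z) = y \<bullet> (Q j *v y)) \<and> (\<forall>j\<in>F. z \<bullet> (Q j *v z) = s j) \<and>
     b 0 \<bullet> z \<le> b 0 \<bullet> y"
proof (induction F rule: finite_induct)
  case empty
  show ?case by (intro exI[of _ y]) auto
next
  case (insert j F)
  then obtain z' where z': "\<forall>i\<in>{1..p}. b i \<bullet> z' = b i \<bullet> y"
     "\<forall>j\<in>{1..m}-F. z' \<bullet> (Q j *v z') = y \<bullet> (Q j *v y)" "\<forall>j\<in>F. z' \<bullet> (Q j *v z') = s j"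
     "b 0 \<bullet> z' \<le> b 0 \<bullet> y" by blast
  have jK: "j \<in> Kset m p a" using insert by blast
  have jm: "j \<in> {1..m}" using jK K_sub by blast
  have Fm: "F \<subseteq> {1..m}" using insert K_sub by blast
  have "z' \<bullet> (Q j *v z') \<le> s j" using z'(2) jm insert(2) ys jK by auto
  then obtain z where z: "\<forall>i\<in>{1..p}. b i \<bullet> z = b i \<bullet> z'"
    "\<forall>i\<in>{1..m}-{j}. z \<bullet> (Q i *v z) = z' \<bullet> (Q i *v z')"
    "z \<bullet> (Q j *v z) = s j" "b 0 \<bullet> z \<le> b 0 \<bullet> z'"
    using move[OF psd dimcond jK] by blast
  show ?case
  proof (intro exI[of _ z] conjI ballI)
    show "b i \<bullet> z = b i \<bullet> y" if "i \<in> {1..p}" for i using z(1) z'(1) that by simp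
    show "z \<bullet> (Q i *v z) = y \<bullet> (Q i *v y)" if "i \<in> {1..m} - insert j F" for i
      using z(2) z'(2) that by auto
    show "z \<bullet> (Q i *v z) = s i" if "i \<in> insert j F" for i
    proof (cases "i = j")
      case True then show ?thesis using z(3) by simp
    next
      case False
      then have "i \<in> F" "i \<in> {1..m}" using that Fm by auto
      then show ?thesis using z(2) z'(3) False by auto
    qed
    show "b 0 \<bullet> z \<le> b 0 \<bullet> y" using z(4) z'(4) by simp
  qed
qed

lemma qcqp_to_cr:
  fixes Q :: "nat \<Rightarrow> real^'n^'n"
  assumes psd: "\<forall>j\<in>{1..m}. psd_sym (Q j)"
    and f: "qcqp_feasible m p Q a b c l u x"
  shows "cr_feasible m p Q a b c l u x (\<lambda>j. x \<bullet> (Q j *v x))"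
  unfolding cr_feasible_def
proof (intro conjI ballI)
  fix i assume i: "i \<in> {1..p}"
  have "cr_con m p a b c i x (\<lambda>j. x \<bullet> (Q j *v x)) = gfun m Q a b c i x" by (rule con_eq[OF _ i]) simp
  then show "l i \<le> ereal (cr_con m p a b c i x (\<lambda>j. x \<bullet> (Q j *v x)))"
    "ereal (cr_con m p a b c i x (\<lambda>j. x \<bullet> (Q j *v x))) \<le> u i"
    using f i by (auto simp: qcqp_feasible_def)
next
  fix j assume "j \<in> Kset m p a"
  then have pj: "psd_sym (Q j)" using psd K_sub by blast
  show "norm (psd_sqrt (Q j) *v x, (x \<bullet> (Q j *v x) - 1) / 2) \<le> (x \<bullet> (Q j *v x) + 1) / 2"
    unfolding soc_iff[OF pj] by simp
qed

lemma cr_to_qcqp: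
  fixes Q :: "nat \<Rightarrow> real^'n^'n"
  assumes psd: "\<forall>j\<in>{1..m}. psd_sym (Q j)"
    and dimcond: "\<forall>j\<in>Kset m p a.
        dim (span (b ` {1..p} \<union> null_space (Q j) \<union> (\<Union>i\<in>{1..m} - {j}. range_space (Q i))))
          \<le> CARD('n) - 1"
    and f: "cr_feasible m p Q a b c l u y s"
  shows "\<exists>z. qcqp_feasible m p Q a b c l u z \<and> gfun m Q a b c 0 z \<le> cr_obj m p Q a b c y s"
proof -
  have ys: "\<forall>j\<in>Kset m p a. y \<bullet> (Q j *v y) \<le> s j"
  proof
    fix j assume j: "j \<in> Kset m p a"
    then have pj: "psd_sym (Q j)" using psd K_sub by blast
    have "\<forall>j\<in>Kset m p a. norm (psd_sqrt (Q j) *v y, (s j - 1) / 2) \<le> (s j + 1) / 2"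
      using f unfolding cr_feasible_def by (rule conjunct2)
    then have "norm (psd_sqrt (Q j) *v y, (s j - 1) / 2) \<le> (s j + 1) / 2" using j by (rule bspec)
    then show "y \<bullet> (Q j *v y) \<le> s j" unfolding soc_iff[OF pj] .
  qed
  have fin: "finite (Kset m p a)" by (rule finite_subset[OF K_sub]) simp
  obtain z where z: "\<forall>i\<in>{1..p}. b i \<bullet> z = b i \<bullet> y"
     "\<forall>j\<in>{1..m}-Kset m p a. z \<bullet> (Q j *v z) = y \<bullet> (Q j *v y)" "\<forall>j\<in>Kset m p a. z \<bullet> (Q j *v z) = s j"
     "b 0 \<bullet> z \<le> b 0 \<bullet> y"
    using reduce_ind[OF psd dimcond ys fin subset_refl] by (elim exE conjE) blast
  have "qcqp_feasible m p Q a b c l u z"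
    unfolding qcqp_feasible_def
  proof
    fix i assume i: "i \<in> {1..p}"
    have e1: "cr_con m p a b c i z s = gfun m Q a b c i z" by (rule con_eq[OF z(3) i])
    have e2: "cr_con m p a b c i z s = cr_con m p a b c i y s" using z(1) i by (simp add: cr_con_def)
    have "\<forall>i\<in>{1..p}. l i \<le> ereal (cr_con m p a b c i y s) \<and> ereal (cr_con m p a b c i y s) \<le> u i"
      using f unfolding cr_feasible_def by (rule conjunct1)
    then have "l i \<le> ereal (cr_con m p a b c i y s) \<and> ereal (cr_con m p a b c i y s) \<le> u i" using i by (rule bspec)
    then show "l i \<le> ereal (gfun m Q a b c i z) \<and> ereal (gfun m Q a b c i z) \<le> u i"
      unfolding e1[symmetric] e2 .
  qed
  moreover have "gfun m Q a b c 0 z \<le> cr_obj m p Q a b c y s"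
  proof -
    have "gfun m Q a b c 0 z = cr_obj m p Q a b c z s" using obj_eq[OF z(3)] by (rule sym)
    also have "(\<Sum>j\<in>{1..m} - Kset m p a. a 0 j * (z \<bullet> (Q j *v z))) =
       (\<Sum>j\<in>{1..m} - Kset m p a. a 0 j * (y \<bullet> (Q j *v y)))" using z(2) by (intro sum.cong) auto
    then have "cr_obj m p Q a b c z s \<le> cr_obj m p Q a b c y s" using z(4) unfolding cr_obj_def by linarith
    finally show ?thesis .
  qed
  ultimately show ?thesis by blast
qed

theorem theorem4:
  fixes Q :: "nat \<Rightarrow> real^'n^'n" and a :: "nat \<Rightarrow> nat \<Rightarrow> real"
    and b :: "nat \<Rightarrow> real^'n" and c :: "nat \<Rightarrow> real"
    and l u :: "nat \<Rightarrow> ereal" and m p :: nat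
  assumes psd: "\<forall>j\<in>{1..m}. psd_sym (Q j)"
    and a_vals: "\<forall>i\<in>{0..p}. \<forall>j\<in>{1..m}. a i j \<in> {-1, 0, 1}"
    and lu: "\<forall>i\<in>{1..p}. l i \<le> u i"
    and dimcond: "\<forall>j\<in>Kset m p a.
        dim (span (b ` {1..p} \<union> null_space (Q j) \<union> (\<Union>i\<in>{1..m} - {j}. range_space (Q i))))
          \<le> CARD('n) - 1"
    and bounded: "cr_value m p Q a b c l u > -\<infinity>"
  shows "\<forall>xs. qcqp_solves m p Q a b c l u xs \<longleftrightarrow>
           cr_solves m p Q a b c l u xs (\<lambda>j. xs \<bullet> (Q j *v xs))"
proof (intro allI iffI)
  fix xs
  let ?t = "\<lambda>j. xs \<bullet> (Q j *v xs)"
  have oe: "cr_obj m p Q a b c xs ?t = gfun m Q a b c 0 xs" by (rule obj_eq) simp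
  {
    assume s: "qcqp_solves m p Q a b c l u xs"
    show "cr_solves m p Q a b c l u xs ?t"
      unfolding cr_solves_def
    proof (intro conjI allI impI)
      show "cr_feasible m p Q a b c l u xs ?t" using qcqp_to_cr[OF psd] s by (simp add: qcqp_solves_def)
      fix y s' assume "cr_feasible m p Q a b c l u y s'"
      then obtain z where z: "qcqp_feasible m p Q a b c l u z" "gfun m Q a b c 0 z \<le> cr_obj m p Q a b c y s'"
        using cr_to_qcqp[OF psd dimcond] by blast
      then show "cr_obj m p Q a b c xs ?t \<le> cr_obj m p Q a b c y s'"
        using s oe by (auto simp: qcqp_solves_def intro: order_trans)
    qed
  next
    assume s: "cr_solves m p Q a b c l u xs ?t"
    show "qcqp_solves m p Q a b c l u xs"
      unfolding qcqp_solves_def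
    proof (intro conjI allI impI)
      show "qcqp_feasible m p Q a b c l u xs"
        unfolding qcqp_feasible_def
      proof
        fix i assume i: "i \<in> {1..p}"
        have eq: "cr_con m p a b c i xs ?t = gfun m Q a b c i xs" by (rule con_eq[OF _ i]) simp
        have "cr_feasible m p Q a b c l u xs ?t" using s by (simp only: cr_solves_def)
        then have "\<forall>i\<in>{1..p}. l i \<le> ereal (cr_con m p a b c i xs ?t) \<and> ereal (cr_con m p a b c i xs ?t) \<le> u i"
          unfolding cr_feasible_def by (rule conjunct1)
        then have "l i \<le> ereal (cr_con m p a b c i xs ?t) \<and> ereal (cr_con m p a b c i xs ?t) \<le> u i"
          using i by (rule bspec)
        then show "l i \<le> ereal (gfun m Q a b c i xs) \<and> ereal (gfun m Q a b c i xs) \<le> u i"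
          unfolding eq .
      qed
      fix y assume y: "qcqp_feasible m p Q a b c l u y"
      have "cr_feasible m p Q a b c l u y (\<lambda>j. y \<bullet> (Q j *v y))" by (rule qcqp_to_cr[OF psd y])
      then have "cr_obj m p Q a b c xs ?t \<le> cr_obj m p Q a b c y (\<lambda>j. y \<bullet> (Q j *v y))"
        using s by (simp add: cr_solves_def)
      moreover have "cr_obj m p Q a b c y (\<lambda>j. y \<bullet> (Q j *v y)) = gfun m Q a b c 0 y" by (rule obj_eq) simp
      ultimately show "gfun m Q a b c 0 xs \<le> gfun m Q a b c 0 y" using oe by simp
    qed
  }
qed


end
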